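(* Let $S$ be a monoid, and let $G$ be the union of all sets $E$ with $1\in E\subseteq E(S)$ such that $S$ is $E$-protomodal. Then $S$ is $G$-protomodal, and $H\subseteq G$ for every $H$ with $1\in H\subseteq E(S)$ such that $S$ is $H$-protomodal. If $E'$ is maximal right pre-reduced in $G$, then $S$ is a modal left $E'$-monoid; $E'$ is largest possible in the sense that whenever $S$ is a modal left $E$-monoid there is an injective map $e\mapsto e'$ from $E$ into $E'$ with $e\sim_r e'$ for all $e\in E$; and $S$ is in fact an inductive left $E'$-monoid.
   Context: For a semigroup $S$, $E(S)$ is its set of idempotents and $Se=\{ue\mid u\in S\}$; for $e,f\in E(S)$, $e\le_r f$ iff $e=ef$, and $e\sim_r f$ iff $e\le_r f$ and $f\le_r e$. $E\subseteq E(S)$ is right pre-reduced if $e=ef$ and $f=fe$ imply $e=f$ for $e,f\in E$. For $F\subseteq E(S)$, $E$ is maximal right pre-reduced in $F$ if $E\subseteq F$, $E$ is right pre-reduced, and every element of $F$ is $\sim_r$-related to an element of $E$. For $s,t\in S$, $Eq(s,t)=\{u\in S\mid us=ut\}$. For a monoid $S$ and $1\in F\subseteq E(S)$, $S$ is $F$-protomodal if for every $e\in F$ and $s\in S$, $Eq(s,se)$ is non-empty and equals $Sf$ for some $f\in F$. Let $1\in E\subseteq E(S)$. $S$ is a modal left $E$-monoid if $E$ is right pre-reduced and (I1') for all $t\in S$, $e\in E$ there is $t\cdot e\in E$ such that for all $s\in S$: $ste=st$ iff $s(t\cdot e)=s$. $S$ is an inductive left $E$-monoid if it is a modal left $E$-monoid,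 $(E,\le_r)$ is a meet-semilattice with meet $\wedge$, and (I2') for $s\in S$, $e,f\in E$: $se=sf=s$ implies $s(e\wedge f)=s$. *)

theory Defs
  imports Main
begin

text \<open>The monoid S is the whole carrier of a type of class monoid_mult (not assumed commutative).\<close>

definition idems :: "'a::monoid_mult set" where
  "idems = {e. e * e = e}"

definition le_r :: "'a::monoid_mult \<Rightarrow> 'a \<Rightarrow> bool" where
  "le_r e f \<longleftrightarrow> e = e * f"

definition sim_r :: "'a::monoid_mult \<Rightarrow> 'a \<Rightarrow> bool" where
  "sim_r e f \<longleftrightarrow> le_r e f \<and> le_r f e"

definition right_pre_reduced :: "'a::monoid_mult set \<Rightarrow> bool" where
  "right_pre_reduced E \<longleftrightarrow> E \<subseteq> idems \<and>
     (\<forall>e\<in>E. \<forall>f\<in>E. e = e * f \<and> f = f * e \<longrightarrow> e = f)"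

definition max_right_pre_reduced_in :: "'a::monoid_mult set \<Rightarrow> 'a set \<Rightarrow> bool" where
  "max_right_pre_reduced_in E F \<longleftrightarrow> F \<subseteq> idems \<and> E \<subseteq> F \<and> right_pre_reduced E \<and>
     (\<forall>f\<in>F. \<exists>e\<in>E. sim_r f e)"

definition Eq :: "'a::monoid_mult \<Rightarrow> 'a \<Rightarrow> 'a set" where
  "Eq s t = {u. u * s = u * t}"

definition protomodal :: "'a::monoid_mult set \<Rightarrow> bool" where
  "protomodal F \<longleftrightarrow> 1 \<in> F \<and> F \<subseteq> idems \<and>
     (\<forall>e\<in>F. \<forall>s. Eq s (s * e) \<noteq> {} \<and> (\<exists>f\<in>F. Eq s (s * e) = {u * f | u. True}))"

definition modal_left :: "'a::monoid_mult set \<Rightarrow> bool" where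
  "modal_left E \<longleftrightarrow> 1 \<in> E \<and> E \<subseteq> idems \<and> right_pre_reduced E \<and>
     (\<forall>t. \<forall>e\<in>E. \<exists>d\<in>E. \<forall>s. s * t * e = s * t \<longleftrightarrow> s * d = s)"

definition inductive_left :: "'a::monoid_mult set \<Rightarrow> bool" where
  "inductive_left E \<longleftrightarrow> modal_left E \<and>
     (\<exists>meet. (\<forall>e\<in>E. \<forall>f\<in>E. meet e f \<in> E \<and> le_r (meet e f) e \<and> le_r (meet e f) f \<and>
                 (\<forall>g\<in>E. le_r g e \<and> le_r g f \<longrightarrow> le_r g (meet e f))) \<and>
            (\<forall>s. \<forall>e\<in>E. \<forall>f\<in>E. s * e = s \<and> s * f = s \<longrightarrow> s * meet e f = s))"

end

theory Submission
  imports Defs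
begin

lemma fixS: "p \<in> idems \<Longrightarrow> {u * p | u. True} = {u. u * p = u}"
proof
  assume "p \<in> idems" then have pp: "p * p = p" unfolding idems_def by simp
  show "{u * p | u. True} \<subseteq> {u. u * p = u}" using pp by (auto simp: mult.assoc)
  show "{u. u * p = u} \<subseteq> {u * p | u. True}" by (auto simp del: mult.assoc) (metis)
qed

lemma protoE:
  assumes "protomodal F" "e \<in> F"
  shows "\<exists>f\<in>F. \<forall>u. (u * s = u * s * e) \<longleftrightarrow> u * f = u"
proof -
  from assms obtain f where f: "f \<in> F" "Eq s (s * e) = {u * f | u. True}"
    unfolding protomodal_def by blast
  have "f \<in> idems" using f(1) assms(1) unfolding protomodal_def by blast
  then have H: "Eq s (s*e) = {u. u * f = u}" using f(2) fixS by simp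
  have "\<forall>u. (u * s = u * s * e) \<longleftrightarrow> u * f = u"
  proof
    fix u
    have "(u * s = u * s * e) \<longleftrightarrow> u \<in> Eq s (s*e)" unfolding Eq_def by (simp add: mult.assoc)
    then show "(u * s = u * s * e) \<longleftrightarrow> u * f = u" unfolding H by simp
  qed
  then show ?thesis using f(1) by blast
qed

lemma meet_exists:
  assumes P: "protomodal F" and a: "a \<in> F" and b: "b \<in> F"
  shows "\<exists>m\<in>idems. \<forall>u. u * m = u \<longleftrightarrow> (u * a = u \<and> u * b = u)"
proof -
  obtain d where d: "d \<in> F" "\<And>u. (u * a = u * a * b) \<longleftrightarrow> u * d = u"
    using protoE[OF P b, of a] by blast
  obtain g where g: "g \<in> F" "\<And>u. (u * d = u * d * a) \<longleftrightarrow> u * g = u"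
    using protoE[OF P a, of d] by blast
  have di: "d * d = d" and gi: "g * g = g" using d g P unfolding protomodal_def idems_def by auto
  define m where "m = g * d"
  have "g * d = g * d * a" using g(2)[of g] gi by simp
  then have ma: "m * a = m" unfolding m_def by simp
  have "m * d = m" unfolding m_def using di by (simp add: mult.assoc)
  then have "m * a = m * a * b" using d(2) by blast
  then have mb: "m * b = m" using ma by simp
  have K: "u * m = u" if "u * a = u" "u * b = u" for u
  proof -
    have "u * a = u * a * b" using that by simp
    then have ud: "u * d = u" using d(2) by blast
    then have "u * d = u * d * a" using that by simp
    then have "u * g = u" using g(2) by blast
    then show ?thesis unfolding m_def using ud by (simp add: mult.assoc[symmetric])
  qed
  have "m * m = m" using K[OF ma mb] .
  then have "m \<in> idems" unfolding idems_def by simp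
  moreover have "\<forall>u. u * m = u \<longleftrightarrow> (u * a = u \<and> u * b = u)"
  proof (intro allI iffI)
    fix u assume "u * m = u"
    then show "u * a = u \<and> u * b = u" using ma mb
    proof -
      have "u * a = u * m * a" using \<open>u * m = u\<close> by simp
      also have "\<dots> = u * (m * a)" by (rule mult.assoc)
      also have "\<dots> = u * m" by (simp only: ma)
      also have "\<dots> = u" by (rule \<open>u * m = u\<close>)
      finally have A: "u * a = u" .
      have "u * b = u * m * b" using \<open>u * m = u\<close> by simp
      also have "\<dots> = u * (m * b)" by (rule mult.assoc)
      also have "\<dots> = u * m" by (simp only: mb)
      also have "\<dots> = u" by (rule \<open>u * m = u\<close>)
      finally show "u * a = u \<and> u * b = u" using A by simp
    qed
  next
    fix u assume "u * a = u \<and> u * b = u" then show "u * m = u" using K by blast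
  qed
  ultimately show ?thesis by blast
qed

lemma simfix_lem:
  assumes "sim_r f e" shows "\<forall>u. u * f = u \<longleftrightarrow> u * e = u"
proof -
  from assms have fe: "f = f * e" "e = e * f" unfolding sim_r_def le_r_def by auto
  show ?thesis
  proof (intro allI iffI)
    fix u assume "u * f = u" then have "u * e = u * f * e" by simp
    also have "\<dots> = u * f" using fe(1) by (simp add: mult.assoc)
    finally show "u * e = u" using \<open>u * f = u\<close> by simp
  next
    fix u assume "u * e = u" then have "u * f = u * e * f" by simp
    also have "\<dots> = u * e" using fe(2) by (simp add: mult.assoc)
    finally show "u * f = u" using \<open>u * e = u\<close> by simp
  qed
qed

lemma one_proto: "protomodal {1}"
  unfolding protomodal_def idems_def Eq_def by auto

theorem proposition5p14:
  fixes G :: "'a::monoid_mult set"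
  assumes G_def: "G = \<Union>{E. 1 \<in> E \<and> E \<subseteq> idems \<and> protomodal E}"
  shows "protomodal G
    \<and> (\<forall>H. 1 \<in> H \<and> H \<subseteq> idems \<and> protomodal H \<longrightarrow> H \<subseteq> G)
    \<and> (\<forall>E'. max_right_pre_reduced_in E' G \<longrightarrow>
          modal_left E'
        \<and> (\<forall>E. modal_left E \<longrightarrow>
              (\<exists>\<phi>. inj_on \<phi> E \<and> \<phi> ` E \<subseteq> E' \<and> (\<forall>e\<in>E. sim_r e (\<phi> e))))
        \<and> inductive_left E')"
proof -
  have sub: "\<And>H. 1 \<in> H \<and> H \<subseteq> idems \<and> protomodal H \<Longrightarrow> H \<subseteq> G"
    unfolding G_def by blast
  have one: "1 \<in> G" using sub[of "{1}"] one_proto unfolding idems_def by auto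
  have Gid: "G \<subseteq> idems" unfolding G_def by blast
  have PG: "protomodal G"
    unfolding protomodal_def
  proof (intro conjI one Gid ballI allI)
    fix e s assume "e \<in> G"
    then obtain E where E: "protomodal E" "E \<subseteq> G" "e \<in> E" unfolding G_def by blast
    then obtain f where f: "f \<in> E" "Eq s (s * e) = {u * f | u. True}"
      unfolding protomodal_def by blast
    show "Eq s (s * e) \<noteq> {}" using f by auto
    show "\<exists>f\<in>G. Eq s (s * e) = {u * f | u. True}" using f E by blast
  qed
  \<comment> \<open>closure under meets\<close>
  define M where "M = {p \<in> idems. \<exists>a\<in>G. \<exists>b\<in>G. \<forall>u. u * p = u \<longleftrightarrow> (u * a = u \<and> u * b = u)}"
  have GM: "G \<subseteq> M" unfolding M_def using Gid by auto
  have PM: "protomodal M"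
    unfolding protomodal_def
  proof (intro conjI ballI allI)
    show "1 \<in> M" using GM one by blast
    show "M \<subseteq> idems" unfolding M_def by blast
    fix p s assume "p \<in> M"
    then obtain a b where ab: "a \<in> G" "b \<in> G" "p \<in> idems"
      "\<And>u. u * p = u \<longleftrightarrow> (u * a = u \<and> u * b = u)" unfolding M_def by blast
    obtain a' where a': "a' \<in> G" "\<And>u. (u * s = u * s * a) \<longleftrightarrow> u * a' = u"
      using protoE[OF PG ab(1)] by blast
    obtain b' where b': "b' \<in> G" "\<And>u. (u * s = u * s * b) \<longleftrightarrow> u * b' = u"
      using protoE[OF PG ab(2)] by blast
    obtain m where m: "m \<in> idems" "\<And>u. u * m = u \<longleftrightarrow> (u * a' = u \<and> u * b' = u)"
      using meet_exists[OF PG a'(1) b'(1)] by blast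
    have mM: "m \<in> M" unfolding M_def using m a' b' by blast
    have "Eq s (s * p) = {u. u * m = u}"
    proof -
      have "\<And>u. u * s = u * (s * p) \<longleftrightarrow> (u * s * a = u * s \<and> u * s * b = u * s)"
      proof -
        fix u
        have "u * s = u * (s * p) \<longleftrightarrow> u * s * p = u * s" by (auto simp: mult.assoc)
        then show "u * s = u * (s * p) \<longleftrightarrow> (u * s * a = u * s \<and> u * s * b = u * s)"
          using ab(4)[of "u * s"] by simp
      qed
      moreover have "\<And>u. (u * s * a = u * s \<and> u * s * b = u * s) \<longleftrightarrow> u * m = u"
      proof -
        fix u
        have "u * s * a = u * s \<longleftrightarrow> u * a' = u" using a'(2)[of u] by auto
        moreover have "u * s * b = u * s \<longleftrightarrow> u * b' = u" using b'(2)[of u] by auto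
        ultimately show "(u * s * a = u * s \<and> u * s * b = u * s) \<longleftrightarrow> u * m = u" using m(2)[of u] by blast
      qed
      ultimately show ?thesis unfolding Eq_def by blast
    qed
    then have E: "Eq s (s * p) = {u * m | u. True}" using fixS[OF m(1)] by simp
    show "Eq s (s * p) \<noteq> {}" using E by auto
    show "\<exists>f\<in>M. Eq s (s * p) = {u * f | u. True}" using E mM by blast
  qed
  have MG: "M \<subseteq> G" using sub[of M] PM unfolding protomodal_def by blast
  have part3: "modal_left E'
        \<and> (\<forall>E. modal_left E \<longrightarrow>
              (\<exists>\<phi>. inj_on \<phi> E \<and> \<phi> ` E \<subseteq> E' \<and> (\<forall>e\<in>E. sim_r e (\<phi> e))))
        \<and> inductive_left E'" if mx: "max_right_pre_reduced_in E' G" for E'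
  proof -
    have E'G: "E' \<subseteq> G" and rpr: "right_pre_reduced E'"
      and cov: "\<forall>f\<in>G. \<exists>e\<in>E'. sim_r f e" using mx unfolding max_right_pre_reduced_in_def by auto
    have E'id: "E' \<subseteq> idems" using E'G Gid by blast
    have cov2: "\<exists>e\<in>E'. \<forall>u. u * f = u \<longleftrightarrow> u * e = u" if "f \<in> G" for f
    proof -
      from cov that obtain e where e: "e \<in> E'" "sim_r f e" by (meson bexE)
      have "\<forall>u. u * f = u \<longleftrightarrow> u * e = u" by (rule simfix_lem[OF e(2)])
      then show ?thesis using e(1) by (rule_tac bexI)
    qed
    have one': "1 \<in> E'"
    proof -
      obtain e where "e \<in> E'" "sim_r 1 e" using cov one by blast
      then show ?thesis unfolding sim_r_def le_r_def by simp
    qed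
    have MLx: "modal_left E'"
      unfolding modal_left_def
    proof (intro conjI one' E'id rpr allI ballI)
      fix t e assume "e \<in> E'"
      then obtain f where f: "f \<in> G" "\<And>u. (u * t = u * t * e) \<longleftrightarrow> u * f = u"
        using protoE[OF PG, of e t] E'G \<open>e \<in> E'\<close> by blast
      obtain d where "d \<in> E'" "\<forall>u. u * f = u \<longleftrightarrow> u * d = u" using cov2 f(1) by blast
      moreover have "\<forall>s. s * t * e = s * t \<longleftrightarrow> s * d = s"
      proof
        fix s
        have "s * t * e = s * t \<longleftrightarrow> s * t = s * t * e" by (rule eq_commute)
        also have "\<dots> \<longleftrightarrow> s * f = s" by (rule f(2))
        also have "\<dots> \<longleftrightarrow> s * d = s" using \<open>\<forall>u. u * f = u \<longleftrightarrow> u * d = u\<close> by blast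
        finally show "s * t * e = s * t \<longleftrightarrow> s * d = s" .
      qed
      ultimately show "\<exists>d\<in>E'. \<forall>s. s * t * e = s * t \<longleftrightarrow> s * d = s" by blast
    qed
    have INJ: "\<exists>\<phi>. inj_on \<phi> E \<and> \<phi> ` E \<subseteq> E' \<and> (\<forall>e\<in>E. sim_r e (\<phi> e))"
      if ME: "modal_left E" for E
    proof -
      have Eid: "E \<subseteq> idems" and one_E: "1 \<in> E" and rE: "right_pre_reduced E"
        using ME unfolding modal_left_def by auto
      have "protomodal E"
        unfolding protomodal_def
      proof (intro conjI one_E Eid ballI allI)
        fix e s assume "e \<in> E"
        have ML3: "\<forall>t. \<forall>e\<in>E. \<exists>d\<in>E. \<forall>s. s * t * e = s * t \<longleftrightarrow> s * d = s"
          using ME unfolding modal_left_def by (elim conjE)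
        then have "\<exists>d\<in>E. \<forall>u. u * s * e = u * s \<longleftrightarrow> u * d = u" using \<open>e \<in> E\<close> by (elim allE[of _ s] ballE[of _ _ e]) simp_all
        then obtain d where d: "d \<in> E" "\<forall>u. u * s * e = u * s \<longleftrightarrow> u * d = u" by (elim bexE) simp
        have "Eq s (s * e) = {u. u * d = u}"
        proof (rule set_eqI)
          fix u
          have "u \<in> Eq s (s * e) \<longleftrightarrow> u * s * e = u * s" unfolding Eq_def by (auto simp: mult.assoc)
          also have "\<dots> \<longleftrightarrow> u * d = u" using d(2) by (rule spec)
          finally show "u \<in> Eq s (s * e) \<longleftrightarrow> u \<in> {u. u * d = u}" by simp
        qed
        then have Ed: "Eq s (s * e) = {u * d | u. True}" using fixS d(1) Eid by auto
        show "Eq s (s * e) \<noteq> {}" using Ed by auto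
        show "\<exists>f\<in>E. Eq s (s * e) = {u * f | u. True}" using Ed d(1) by blast
      qed
      then have EG: "E \<subseteq> G" using sub one_E Eid by blast
      define \<phi> where "\<phi> e = (SOME e'. e' \<in> E' \<and> sim_r e e')" for e
      have ph: "\<phi> e \<in> E' \<and> sim_r e (\<phi> e)" if "e \<in> E" for e
      proof -
        have "e \<in> G" using EG that by blast
        then have "\<exists>e'\<in>E'. sim_r e e'" using cov by (rule_tac bspec)
        then have "\<exists>e'. e' \<in> E' \<and> sim_r e e'" by (simp add: Bex_def)
        then show ?thesis unfolding \<phi>_def by (rule someI_ex)
      qed
      have "inj_on \<phi> E"
      proof (rule inj_onI)
        fix x y assume xy: "x \<in> E" "y \<in> E" "\<phi> x = \<phi> y"
        have "sim_r x (\<phi> x)" using ph[OF xy(1)] by simp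
        moreover have "sim_r y (\<phi> x)" using ph[OF xy(2)] xy(3) by simp
        ultimately have h: "x = x * \<phi> x" "\<phi> x = \<phi> x * x" "y = y * \<phi> x" "\<phi> x = \<phi> x * y"
          unfolding sim_r_def le_r_def by auto
        have "x * y = x * \<phi> x * y" using h(1) by simp
        also have "\<dots> = x * (\<phi> x * y)" by (rule mult.assoc)
        also have "\<dots> = x * \<phi> x" using h(4) by simp
        also have "\<dots> = x" using h(1) by simp
        finally have 1: "x = x * y" by simp
        have "y * x = y * \<phi> x * x" using h(3) by simp
        also have "\<dots> = y * (\<phi> x * x)" by (rule mult.assoc)
        also have "\<dots> = y * \<phi> x" using h(2) by simp
        also have "\<dots> = y" using h(3) by simp
        finally have "x = x * y \<and> y = y * x" using 1 by simp
        then show "x = y" using rE xy unfolding right_pre_reduced_def by blast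
      qed
      moreover have "\<phi> ` E \<subseteq> E'" using ph by blast
      moreover have "\<forall>e\<in>E. sim_r e (\<phi> e)" using ph by blast
      ultimately show ?thesis by (intro exI[of _ \<phi>] conjI)
    qed
    have IL: "inductive_left E'"
      unfolding inductive_left_def
    proof (intro conjI MLx)
      have ex: "\<exists>m'. m' \<in> E' \<and> (\<forall>u. u * m' = u \<longleftrightarrow> (u * e = u \<and> u * f = u))"
        if "e \<in> E'" "f \<in> E'" for e f
      proof -
        have eG: "e \<in> G" "f \<in> G" using that E'G by auto
        obtain m where m: "m \<in> idems" "\<And>u. u * m = u \<longleftrightarrow> (u * e = u \<and> u * f = u)"
          using meet_exists[OF PG eG] by (elim bexE) simp
        have "\<forall>u. u * m = u \<longleftrightarrow> (u * e = u \<and> u * f = u)" using m(2) by (rule allI)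
        then have "m \<in> M" unfolding M_def using m(1) eG by (intro CollectI conjI bexI)
        then have "m \<in> G" using MG by blast
        obtain d where d: "d \<in> E'" "\<forall>u. u * m = u \<longleftrightarrow> u * d = u" using cov2[OF \<open>m \<in> G\<close>] by (elim bexE)
        have "\<forall>u. u * d = u \<longleftrightarrow> (u * e = u \<and> u * f = u)"
        proof
          fix u show "u * d = u \<longleftrightarrow> (u * e = u \<and> u * f = u)" using m(2)[of u] d(2)[rule_format, of u] by simp
        qed
        then show ?thesis using d(1) by (intro exI conjI)
      qed
      define meet where "meet e f = (SOME m'. m' \<in> E' \<and> (\<forall>u. u * m' = u \<longleftrightarrow> (u * e = u \<and> u * f = u)))" for e f
      have mt: "meet e f \<in> E' \<and> (\<forall>u. u * meet e f = u \<longleftrightarrow> (u * e = u \<and> u * f = u))"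
        if "e \<in> E'" "f \<in> E'" for e f
        unfolding meet_def by (rule someI_ex) (rule ex[OF that])
      have idm: "\<And>x. x \<in> E' \<Longrightarrow> x * x = x" using E'id unfolding idems_def by blast
      show "\<exists>meet. (\<forall>e\<in>E'. \<forall>f\<in>E'. meet e f \<in> E' \<and> le_r (meet e f) e \<and> le_r (meet e f) f \<and>
                 (\<forall>g\<in>E'. le_r g e \<and> le_r g f \<longrightarrow> le_r g (meet e f))) \<and>
            (\<forall>s. \<forall>e\<in>E'. \<forall>f\<in>E'. s * e = s \<and> s * f = s \<longrightarrow> s * meet e f = s)"
      proof (rule exI[of _ meet], rule conjI)
        have A: "meet e f \<in> E' \<and> le_r (meet e f) e \<and> le_r (meet e f) f \<and>
                 (\<forall>g\<in>E'. le_r g e \<and> le_r g f \<longrightarrow> le_r g (meet e f))" if ef: "e \<in> E'" "f \<in> E'" for e f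
        proof -
          note q = mt[OF ef]
          have mi: "meet e f * meet e f = meet e f" using idm q[THEN conjunct1] by simp
          have qq: "meet e f * e = meet e f \<and> meet e f * f = meet e f"
            using q[THEN conjunct2, rule_format, of "meet e f"] mi by simp
          have 1: "le_r (meet e f) e" unfolding le_r_def using qq by simp
          have 2: "le_r (meet e f) f" unfolding le_r_def using qq by simp
          have 3: "\<forall>g\<in>E'. le_r g e \<and> le_r g f \<longrightarrow> le_r g (meet e f)"
          proof (intro ballI impI)
            fix g assume "g \<in> E'" "le_r g e \<and> le_r g f"
            then have "g * e = g \<and> g * f = g" unfolding le_r_def by simp
            then have "g * meet e f = g" using q[THEN conjunct2, rule_format, of g] by simp
            then show "le_r g (meet e f)" unfolding le_r_def by simp
          qed
          show ?thesis using q[THEN conjunct1] 1 2 3 by (intro conjI)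
        qed
        then show "\<forall>e\<in>E'. \<forall>f\<in>E'. meet e f \<in> E' \<and> le_r (meet e f) e \<and> le_r (meet e f) f \<and>
                 (\<forall>g\<in>E'. le_r g e \<and> le_r g f \<longrightarrow> le_r g (meet e f))" by (intro ballI)
        show "\<forall>s. \<forall>e\<in>E'. \<forall>f\<in>E'. s * e = s \<and> s * f = s \<longrightarrow> s * meet e f = s"
        proof (intro allI ballI impI)
          fix s e f assume ef: "e \<in> E'" "f \<in> E'" and "s * e = s \<and> s * f = s"
          then show "s * meet e f = s" using mt[OF ef, THEN conjunct2, rule_format, of s] by simp
        qed
      qed
    qed
    show ?thesis using MLx IL by (intro conjI allI impI INJ) auto
  qed
  show ?thesis using PG sub part3 by blast
qed

end
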